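(* Let $p$ be a prime, $G$ a finite Abelian $p$-group, and $\mathcal M\subset B(G\times C_p)$ the $\mathbb Z$-submodule generated by all Type 2 elements $B_{G',L}$ ($L<G'\le G$, $G'/L\cong C_p$). Then $\mathcal M\subset K(G\times C_p)$ and the kernel of the restriction $\sigma|_{\mathcal M}:\mathcal M\to B(G)$ equals $\mathcal M\cap K(G,C_p)$.
   Context: $B(\Pi)$ for Abelian $\Pi$ is the Burnside ring, free on subgroups. Subgroups of $G\times C_p$ are products $L\times C_p$ or graphs $K\times\rho=\{(k,\rho(k))\}$ ($\rho:K\to C_p$ a homomorphism, $K\le G$); $\epsilon$ is the trivial homomorphism. $B(G,C_p)$ is the span of graphs. $K(G\times C_p)$ is the kernel of $B(G\times C_p)\to R_{\mathbb Q}(G\times C_p)$, $S\mapsto[\mathbb Q[(G\times C_p)/S]]$, and $K(G,C_p)=K(G\times C_p)\cap B(G,C_p)$. Type 2 element: $B_{G',L}=L\times\epsilon-\sum_{\tilde\beta}G'\times\tilde\beta-L\times C_p+p\,(G'\times C_p)$, $\tilde\beta$ over homomorphisms $G'\to C_p$ trivial on $L$. The signature $\sigma:B(G\times C_p)\to B(G)$ sends $L\times C_p\mapsto L$ ($L\le G$) and every graph to $0$. *)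

theory Defs
  imports "HOL-Algebra.Algebra"
begin

abbreviation Cp :: "nat \<Rightarrow> int monoid" where
  "Cp p \<equiv> integer_mod_group p"

text \<open>Burnside ring B(P) of a finite Abelian group P: integer-valued functions on the set
  of subgroups (the free Z-module on the subgroups; coefficient of S is x S).\<close>
definition burnside :: "'b monoid \<Rightarrow> ('b set \<Rightarrow> int) set" where
  "burnside P = {x. \<forall>S. x S \<noteq> 0 \<longrightarrow> subgroup S P}"

definition bas :: "'b set \<Rightarrow> ('b set \<Rightarrow> int)" where
  "bas S = (\<lambda>T. if T = S then 1 else 0)"

text \<open>Character of the permutation representation Q[P/S] at g: the number of cosets
  of S fixed by g.\<close>
definition perm_char :: "'b monoid \<Rightarrow> 'b set \<Rightarrow> 'b \<Rightarrow> nat" where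
  "perm_char P S g = card {C \<in> rcosets\<^bsub>P\<^esub> S. C #>\<^bsub>P\<^esub> g = C}"

text \<open>K(P): kernel of B(P) -> R_Q(P), S |-> [Q[P/S]]. A virtual rational representation
  is zero iff its character vanishes.\<close>
definition Kker :: "'b monoid \<Rightarrow> ('b set \<Rightarrow> int) set" where
  "Kker P = {x \<in> burnside P. \<forall>g \<in> carrier P.
      (\<Sum>S \<in> {S. subgroup S P}. x S * int (perm_char P S g)) = 0}"

definition graph_sg :: "'a set \<Rightarrow> ('a \<Rightarrow> int) \<Rightarrow> ('a \<times> int) set" where
  "graph_sg K rho = {(k, rho k) | k. k \<in> K}"

definition is_graph :: "'a monoid \<Rightarrow> nat \<Rightarrow> ('a \<times> int) set \<Rightarrow> bool" where
  "is_graph G p H \<longleftrightarrow> (\<exists>K rho. subgroup K G \<and> rho \<in> hom (G\<lparr>carrier := K\<rparr>) (Cp p)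
                         \<and> H = graph_sg K rho)"

definition BGC :: "'a monoid \<Rightarrow> nat \<Rightarrow> (('a \<times> int) set \<Rightarrow> int) set" where
  "BGC G p = {x \<in> burnside (G \<times>\<times> Cp p). \<forall>H. x H \<noteq> 0 \<longrightarrow> is_graph G p H}"

definition KGC :: "'a monoid \<Rightarrow> nat \<Rightarrow> (('a \<times> int) set \<Rightarrow> int) set" where
  "KGC G p = Kker (G \<times>\<times> Cp p) \<inter> BGC G p"

definition homs_triv :: "'a monoid \<Rightarrow> nat \<Rightarrow> 'a set \<Rightarrow> 'a set \<Rightarrow> ('a \<Rightarrow> int) set" where
  "homs_triv G p G' L = {rho \<in> hom (G\<lparr>carrier := G'\<rparr>) (Cp p) \<inter> extensional G'.
                          \<forall>l \<in> L. rho l = 0}"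

definition type2 :: "'a monoid \<Rightarrow> nat \<Rightarrow> 'a set \<Rightarrow> 'a set \<Rightarrow> (('a \<times> int) set \<Rightarrow> int)" where
  "type2 G p G' L = (\<lambda>H.
      bas (graph_sg L (\<lambda>_. 0)) H
    - (\<Sum>rho \<in> homs_triv G p G' L. bas (graph_sg G' rho) H)
    - bas (L \<times> carrier (Cp p)) H
    + int p * bas (G' \<times> carrier (Cp p)) H)"

inductive_set zspan :: "('b \<Rightarrow> int) set \<Rightarrow> ('b \<Rightarrow> int) set" for A where
  zero: "(\<lambda>_. 0) \<in> zspan A"
| gen: "v \<in> A \<Longrightarrow> v \<in> zspan A"
| add: "x \<in> zspan A \<Longrightarrow> y \<in> zspan A \<Longrightarrow> (\<lambda>H. x H + y H) \<in> zspan A"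
| neg: "x \<in> zspan A \<Longrightarrow> (\<lambda>H. - x H) \<in> zspan A"

text \<open>The signature sigma: L x C_p |-> L, graphs |-> 0.\<close>
definition sigma :: "'a monoid \<Rightarrow> nat \<Rightarrow> (('a \<times> int) set \<Rightarrow> int) \<Rightarrow> ('a set \<Rightarrow> int)" where
  "sigma G p x = (\<lambda>L. if subgroup L G then x (L \<times> carrier (Cp p)) else 0)"

definition type2_module :: "'a monoid \<Rightarrow> nat \<Rightarrow> (('a \<times> int) set \<Rightarrow> int) set" where
  "type2_module G p = zspan {type2 G p G' L | G' L.
      subgroup G' G \<and> subgroup L G \<and> L \<subset> G' \<and>
      (G\<lparr>carrier := G'\<rparr>) Mod L \<cong> Cp p}"

end

theory Submission
  imports Defs
begin


lemma Cp_carrier: "Factorial_Ring.prime p \<Longrightarrow> carrier (Cp p) = {0..<int p}"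
  by (simp add: carrier_integer_mod_group prime_gt_0_nat)

lemma Cp_card: "Factorial_Ring.prime p \<Longrightarrow> card (carrier (Cp p)) = p"
  by (simp add: Cp_carrier)

lemma P_comm: "comm_group G \<Longrightarrow> comm_group (G \<times>\<times> Cp p)"
proof -
  assume "comm_group G"
  then interpret G: comm_group G .
  have gr: "group (G \<times>\<times> Cp p)" by (simp add: DirProd_group G.is_group)
  show ?thesis
    by (rule group.group_comm_groupI[OF gr]) (auto simp: G.m_comm add.commute)
qed

lemma perm_char_eq:
  assumes "comm_group P" "subgroup S P" "g \<in> carrier P"
  shows "perm_char P S g = (if g \<in> S then card (rcosets\<^bsub>P\<^esub> S) else 0)"
proof -
  interpret P: comm_group P by fact
  interpret S: subgroup S P by fact
  have "{C \<in> rcosets\<^bsub>P\<^esub> S. C #>\<^bsub>P\<^esub> g = C} = (if g \<in> S then rcosets\<^bsub>P\<^esub> S else {})"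
  proof (cases "g \<in> S")
    case True
    have "C #>\<^bsub>P\<^esub> g = C" if C_in: "C \<in> rcosets\<^bsub>P\<^esub> S" for C
    proof -
      obtain h where h: "h \<in> carrier P" "C = S #>\<^bsub>P\<^esub> h" using C_in unfolding RCOSETS_def by blast
      have "C #>\<^bsub>P\<^esub> g = S #>\<^bsub>P\<^esub> (h \<otimes>\<^bsub>P\<^esub> g)"
        using h True by (simp add: P.coset_mult_assoc S.subset)
      also have "\<dots> = S #>\<^bsub>P\<^esub> (g \<otimes>\<^bsub>P\<^esub> h)" using h assms(3) P.m_comm by simp
      also have "\<dots> = (S #>\<^bsub>P\<^esub> g) #>\<^bsub>P\<^esub> h" using h assms(3) by (simp add: P.coset_mult_assoc S.subset)
      also have "\<dots> = C" using S.rcos_const[OF P.is_group True] h by simp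
      finally show ?thesis .
    qed
    with True show ?thesis by auto
  next
    case False
    have "C #>\<^bsub>P\<^esub> g \<noteq> C" if C_in: "C \<in> rcosets\<^bsub>P\<^esub> S" for C
    proof
      assume eq: "C #>\<^bsub>P\<^esub> g = C"
      obtain h where h: "h \<in> carrier P" "C = S #>\<^bsub>P\<^esub> h" using C_in unfolding RCOSETS_def by blast
      have "C #>\<^bsub>P\<^esub> g = S #>\<^bsub>P\<^esub> (h \<otimes>\<^bsub>P\<^esub> g)"
        using h assms(3) by (simp add: P.coset_mult_assoc S.subset)
      hence "h \<otimes>\<^bsub>P\<^esub> g \<in> S #>\<^bsub>P\<^esub> h" using eq h P.rcos_self[OF _ assms(2), of "h \<otimes>\<^bsub>P\<^esub> g"] assms(3) by simp
      hence "(h \<otimes>\<^bsub>P\<^esub> g) \<otimes>\<^bsub>P\<^esub> inv\<^bsub>P\<^esub> h \<in> S" using S.rcos_module_imp[OF P.is_group h(1)] by simp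
      moreover have "(h \<otimes>\<^bsub>P\<^esub> g) \<otimes>\<^bsub>P\<^esub> inv\<^bsub>P\<^esub> h = g"
        using h assms(3) by (metis P.inv_solve_right' P.m_closed P.m_comm)
      ultimately show False using False by simp
    qed
    with False show ?thesis by auto
  qed
  thus ?thesis unfolding perm_char_def by simp
qed



lemma graph_mem: "(a, c) \<in> graph_sg K rho \<longleftrightarrow> a \<in> K \<and> c = rho a"
  unfolding graph_sg_def by auto

lemma graph_card: "card (graph_sg K rho) = card K"
proof -
  have "graph_sg K rho = (\<lambda>k. (k, rho k)) ` K" unfolding graph_sg_def by auto
  moreover have "inj_on (\<lambda>k. (k, rho k)) K" by (auto simp: inj_on_def)
  ultimately show ?thesis by (simp add: card_image)
qed

lemma graph_subgroup:
  assumes "group G" "subgroup K G" "rho \<in> hom (G\<lparr>carrier := K\<rparr>) (Cp p)"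
  shows "subgroup (graph_sg K rho) (G \<times>\<times> Cp p)"
proof -
  interpret G: group G by fact
  interpret K: subgroup K G by fact
  have gK: "group (G\<lparr>carrier := K\<rparr>)" by (simp add: G.subgroup_imp_group assms(2))
  have rc: "rho k \<in> carrier (Cp p)" if "k \<in> K" for k
    using assms(3) that unfolding hom_def by auto
  have rm: "rho (k1 \<otimes>\<^bsub>G\<^esub> k2) = (rho k1 + rho k2) mod int p" if "k1 \<in> K" "k2 \<in> K" for k1 k2
    using hom_mult[OF assms(3), of k1 k2] that by simp
  have r1: "rho \<one>\<^bsub>G\<^esub> = 0"
    using hom_one[OF assms(3) gK] by simp
  have ri: "rho (inv\<^bsub>G\<^esub> k) = inv\<^bsub>Cp p\<^esub> (rho k)" if "k \<in> K" for k
  proof -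
    have "group_hom (G\<lparr>carrier := K\<rparr>) (Cp p) rho"
      using gK assms(3) by (simp add: group_hom_def group_hom_axioms_def)
    then have "rho (inv\<^bsub>G\<lparr>carrier := K\<rparr>\<^esub> k) = inv\<^bsub>Cp p\<^esub> (rho k)"
      using that by (simp add: group_hom.hom_inv)
    thus ?thesis using that assms(2) by simp
  qed
  interpret PP: group "G \<times>\<times> Cp p" by (simp add: DirProd_group G.is_group)
  show ?thesis
  proof (rule PP.subgroupI)
    show "graph_sg K rho \<subseteq> carrier (G \<times>\<times> Cp p)"
      using rc K.subset unfolding graph_sg_def by auto
    have "(\<one>\<^bsub>G\<^esub>, rho \<one>\<^bsub>G\<^esub>) \<in> graph_sg K rho" by (simp add: graph_mem K.one_closed)
    thus "graph_sg K rho \<noteq> {}" by blast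
    fix x assume "x \<in> graph_sg K rho"
    then obtain k where k: "k \<in> K" "x = (k, rho k)" unfolding graph_sg_def by auto
    show "inv\<^bsub>G \<times>\<times> Cp p\<^esub> x \<in> graph_sg K rho"
      using k rc[OF k(1)] K.subset ri[OF k(1)] by (auto simp: inv_DirProd graph_mem)
  next
    fix x y assume "x \<in> graph_sg K rho" "y \<in> graph_sg K rho"
    then obtain k1 k2 where "k1 \<in> K" "x = (k1, rho k1)" "k2 \<in> K" "y = (k2, rho k2)"
      unfolding graph_sg_def by auto
    thus "x \<otimes>\<^bsub>G \<times>\<times> Cp p\<^esub> y \<in> graph_sg K rho"
      using rm by (auto simp: graph_mem)
  qed
qed

lemma prod_subgroup:
  assumes "group G" "subgroup L G"
  shows "subgroup (L \<times> carrier (Cp p)) (G \<times>\<times> Cp p)"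
proof -
  interpret G: group G by fact
  interpret L: subgroup L G by fact
  interpret C: group "Cp p" by simp
  interpret PP: group "G \<times>\<times> Cp p" by (simp add: DirProd_group G.is_group)
  show ?thesis
  proof (rule PP.subgroupI)
    show "L \<times> carrier (Cp p) \<subseteq> carrier (G \<times>\<times> Cp p)" using L.subset by auto
    have "(\<one>\<^bsub>G\<^esub>, 0) \<in> L \<times> carrier (Cp p)" using L.one_closed by simp
    thus "L \<times> carrier (Cp p) \<noteq> {}" by blast
    fix x assume "x \<in> L \<times> carrier (Cp p)"
    thus "inv\<^bsub>G \<times>\<times> Cp p\<^esub> x \<in> L \<times> carrier (Cp p)"
      using L.subset by (auto simp: inv_DirProd simp del: inv_integer_mod_group)
  next
    fix x y assume "x \<in> L \<times> carrier (Cp p)" "y \<in> L \<times> carrier (Cp p)"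
    thus "x \<otimes>\<^bsub>G \<times>\<times> Cp p\<^esub> y \<in> L \<times> carrier (Cp p)"
      by (auto simp: mult_DirProd' simp del: mult_integer_mod_group)
  qed
qed

lemma zero_hom:
  assumes "group G" "subgroup L G"
  shows "(\<lambda>_. 0) \<in> hom (G\<lparr>carrier := L\<rparr>) (Cp p)"
  unfolding hom_def by auto

lemma not_graph:
  assumes "Factorial_Ring.prime p" "subgroup L G"
  shows "\<not> is_graph G p (L \<times> carrier (Cp p))"
proof
  assume "is_graph G p (L \<times> carrier (Cp p))"
  then obtain K rho where e: "L \<times> carrier (Cp p) = graph_sg K rho" unfolding is_graph_def by auto
  have p1: "p \<noteq> 1" using assms(1) by auto
  have "(\<one>\<^bsub>G\<^esub>, 0) \<in> graph_sg K rho" "(\<one>\<^bsub>G\<^esub>, 1) \<in> graph_sg K rho"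
    using e[symmetric] subgroup.one_closed[OF assms(2)] p1 by auto
  thus False by (simp add: graph_mem)
qed



lemma count_mod:
  assumes p: "Factorial_Ring.prime p" and d: "0 < d" "d < int p" and c: "0 \<le> c" "c < int p"
  shows "card {k \<in> {0..<int p}. (d * k) mod int p = c} = 1"
proof -
  have pp: "Factorial_Ring.prime (int p)" using p by (simp add: prime_nat_int_transfer)
  have p0: "int p > 0" using p prime_gt_0_nat by auto
  let ?f = "\<lambda>k. (d * k) mod int p"
  have inj: "inj_on ?f {0..<int p}"
  proof (rule inj_onI)
    fix k1 k2 assume k: "k1 \<in> {0..<int p}" "k2 \<in> {0..<int p}" "?f k1 = ?f k2"
    hence "int p dvd d * (k1 - k2)"
      by (metis mod_eq_dvd_iff right_diff_distrib)
    moreover have "\<not> int p dvd d" using d zdvd_not_zless by auto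
    ultimately have "int p dvd (k1 - k2)" using pp prime_dvd_mult_iff by blast
    then obtain t where t: "k1 - k2 = int p * t" by (auto simp: dvd_def)
    have "t = 0"
    proof (rule ccontr)
      assume "t \<noteq> 0"
      hence "\<bar>int p * t\<bar> \<ge> int p" using p0 by (simp add: abs_mult)
      with t k show False by auto
    qed
    with t show "k1 = k2" by simp
  qed
  have "?f ` {0..<int p} = {0..<int p}"
    by (rule endo_inj_surj[OF _ _ inj]) (use p0 in auto)
  moreover have "c \<in> {0..<int p}" using c by simp
  ultimately have "c \<in> ?f ` {0..<int p}" by simp
  then obtain k0 where k0: "k0 \<in> {0..<int p}" "?f k0 = c" by blast
  have "{k \<in> {0..<int p}. ?f k = c} = {k0}"
  proof (intro equalityI subsetI)
    fix k assume "k \<in> {k \<in> {0..<int p}. ?f k = c}"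
    hence "k \<in> {0..<int p}" "?f k = ?f k0" using k0(2) by simp_all
    thus "k \<in> {k0}" using inj_onD[OF inj] k0(1) by blast
  next
    fix k assume "k \<in> {k0}"
    thus "k \<in> {k \<in> {0..<int p}. ?f k = c}" using k0 by simp
  qed
  thus ?thesis by simp
qed



lemma bij_restrict: "bij_betw f A B \<Longrightarrow> bij_betw f {x \<in> A. Q (f x)} {y \<in> B. Q y}"
  unfolding bij_betw_def
proof (intro conjI)
  assume h: "inj_on f A \<and> f ` A = B"
  show "inj_on f {x \<in> A. Q (f x)}" by (rule inj_on_subset[of f A]) (use h in auto)
  show "f ` {x \<in> A. Q (f x)} = {y \<in> B. Q y}"
  proof
    show "f ` {x \<in> A. Q (f x)} \<subseteq> {y \<in> B. Q y}" using h by auto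
    show "{y \<in> B. Q y} \<subseteq> f ` {x \<in> A. Q (f x)}"
    proof
      fix y assume y: "y \<in> {y \<in> B. Q y}"
      then obtain x where x: "x \<in> A" "y = f x" using h by auto
      thus "y \<in> f ` {x \<in> A. Q (f x)}" using y by auto
    qed
  qed
qed

context
  fixes G :: "'a monoid" and p :: nat and G' L :: "'a set" and phi
  assumes p: "Factorial_Ring.prime p" and cG: "comm_group G" and sG': "subgroup G' G"
    and sL: "subgroup L G" and LG': "L \<subset> G'"
    and phi: "phi \<in> iso (G\<lparr>carrier := G'\<rparr> Mod L) (Cp p)"
begin

definition pi where "pi x = phi (L #>\<^bsub>G\<lparr>carrier := G'\<rparr>\<^esub> x)"

lemma grpH: "group (G\<lparr>carrier := G'\<rparr>)"
  using cG sG' by (simp add: comm_group.axioms(2) group.subgroup_imp_group)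

lemma cH: "comm_group (G\<lparr>carrier := G'\<rparr>)"
proof (rule group.group_comm_groupI[OF grpH])
  fix x y assume "x \<in> carrier (G\<lparr>carrier := G'\<rparr>)" "y \<in> carrier (G\<lparr>carrier := G'\<rparr>)"
  thus "x \<otimes>\<^bsub>G\<lparr>carrier := G'\<rparr>\<^esub> y = y \<otimes>\<^bsub>G\<lparr>carrier := G'\<rparr>\<^esub> x"
    using cG sG' by (simp add: comm_group_def comm_monoid.m_comm subgroup.mem_carrier)
qed

lemma sLH: "subgroup L (G\<lparr>carrier := G'\<rparr>)"
  using cG sG' sL LG' by (simp add: comm_group.axioms(2) group.subgroup_incl)

lemma nLH: "L \<lhd> G\<lparr>carrier := G'\<rparr>"
  using comm_group.subgroup_imp_normal[OF cH sLH] .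

lemma grpQ: "group (G\<lparr>carrier := G'\<rparr> Mod L)"
  using nLH by (rule normal.factorgroup_is_group)

lemma phi_hom: "phi \<in> hom (G\<lparr>carrier := G'\<rparr> Mod L) (Cp p)"
  using phi by (rule iso_imp_homomorphism)

lemma phi_L: "phi L = 0"
proof -
  have "phi \<one>\<^bsub>G\<lparr>carrier := G'\<rparr> Mod L\<^esub> = \<one>\<^bsub>Cp p\<^esub>"
    using hom_one[OF phi_hom grpQ] by simp
  thus ?thesis by (simp add: FactGroup_def)
qed

lemma coset_in: "x \<in> G' \<Longrightarrow> L #>\<^bsub>G\<lparr>carrier := G'\<rparr>\<^esub> x \<in> carrier (G\<lparr>carrier := G'\<rparr> Mod L)"
  by (auto simp: FactGroup_def RCOSETS_def)

lemma pi_hom: "pi \<in> hom (G\<lparr>carrier := G'\<rparr>) (Cp p)"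
proof -
  have ch: "(\<lambda>a. L #>\<^bsub>G\<lparr>carrier := G'\<rparr>\<^esub> a) \<in> hom (G\<lparr>carrier := G'\<rparr>) (G\<lparr>carrier := G'\<rparr> Mod L)"
    using nLH by (rule normal.r_coset_hom_Mod)
  show ?thesis
    unfolding hom_def
  proof (intro CollectI conjI ballI)
    show "pi \<in> carrier (G\<lparr>carrier := G'\<rparr>) \<rightarrow> carrier (Cp p)"
      using phi_hom coset_in unfolding pi_def hom_def by auto
    fix x y assume xy: "x \<in> carrier (G\<lparr>carrier := G'\<rparr>)" "y \<in> carrier (G\<lparr>carrier := G'\<rparr>)"
    show "pi (x \<otimes>\<^bsub>G\<lparr>carrier := G'\<rparr>\<^esub> y) = pi x \<otimes>\<^bsub>Cp p\<^esub> pi y"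
      unfolding pi_def
      using hom_mult[OF ch xy] hom_mult[OF phi_hom coset_in coset_in] xy by simp
  qed
qed

lemma pi_carr: "x \<in> G' \<Longrightarrow> pi x \<in> {0..<int p}"
  using pi_hom p unfolding hom_def by (auto simp: carrier_integer_mod_group prime_gt_0_nat)

lemma pi_zero: "x \<in> G' \<Longrightarrow> pi x = 0 \<longleftrightarrow> x \<in> L"
proof
  assume x: "x \<in> G'" and z: "pi x = 0"
  have inj: "inj_on phi (carrier (G\<lparr>carrier := G'\<rparr> Mod L))" using phi by (simp add: iso_iff)
  have Lin: "L \<in> carrier (G\<lparr>carrier := G'\<rparr> Mod L)"
    using monoid.one_closed[OF group.is_monoid[OF grpQ]] by (simp add: FactGroup_def)
  have "L #>\<^bsub>G\<lparr>carrier := G'\<rparr>\<^esub> x = L"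
    using inj_onD[OF inj _ coset_in[OF x] Lin] z phi_L unfolding pi_def by simp
  moreover have "x \<in> L #>\<^bsub>G\<lparr>carrier := G'\<rparr>\<^esub> x"
    using group.rcos_self[OF grpH _ sLH] x by simp
  ultimately show "x \<in> L" by simp
next
  assume "x \<in> L"
  thus "pi x = 0" unfolding pi_def using subgroup.rcos_const[OF sLH grpH] phi_L by simp
qed

lemma ex_a: "\<exists>a \<in> G'. pi a = 1"
proof -
  have "1 \<in> carrier (Cp p)" using p prime_gt_1_nat by (auto simp: carrier_integer_mod_group)
  moreover have "phi ` carrier (G\<lparr>carrier := G'\<rparr> Mod L) = carrier (Cp p)" using phi by (simp add: iso_iff)
  ultimately have "1 \<in> phi ` carrier (G\<lparr>carrier := G'\<rparr> Mod L)" by simp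
  then obtain C where C: "C \<in> carrier (G\<lparr>carrier := G'\<rparr> Mod L)" "phi C = 1" by (metis imageE)
  then obtain a where "a \<in> G'" "C = L #>\<^bsub>G\<lparr>carrier := G'\<rparr>\<^esub> a"
    unfolding FactGroup_def RCOSETS_def by auto
  thus ?thesis using C unfolding pi_def by blast
qed

lemma pi_pow: "a \<in> G' \<Longrightarrow> pi (a [^]\<^bsub>G\<^esub> (m::nat)) = (int m * pi a) mod int p"
proof -
  assume a: "a \<in> G'"
  have "pi (a [^]\<^bsub>G\<lparr>carrier := G'\<rparr>\<^esub> m) = pi a [^]\<^bsub>Cp p\<^esub> m"
    using hom_nat_pow[OF pi_hom _ grpH] a by simp
  moreover have "a [^]\<^bsub>G\<lparr>carrier := G'\<rparr>\<^esub> m = a [^]\<^bsub>G\<^esub> m"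
    using cG by (metis comm_group.axioms(2) group.is_monoid monoid.nat_pow_consistent)
  moreover have "pi a \<in> carrier (Cp p)" using pi_carr[OF a] p by (simp add: carrier_integer_mod_group prime_gt_0_nat)
  ultimately show ?thesis by simp
qed

lemma p0: "int p > 0" using p prime_gt_0_nat by simp

lemma char:
  assumes rho: "rho \<in> hom (G\<lparr>carrier := G'\<rparr>) (Cp p)" "\<forall>l\<in>L. rho l = 0"
    and x: "x \<in> G'" and a: "a \<in> G'" "pi a = 1"
  shows "rho x = (pi x * rho a) mod int p"
proof -
  interpret H: comm_group "G\<lparr>carrier := G'\<rparr>" by (rule cH)
  define m where "m = nat (pi x)"
  have pxm: "pi x = int m" "m < p" using pi_carr[OF x] unfolding m_def by auto
  define am where "am = a [^]\<^bsub>G\<lparr>carrier := G'\<rparr>\<^esub> m"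
  have am: "am \<in> G'" unfolding am_def using a H.nat_pow_closed by simp
  have piam: "pi am = int m"
    using hom_nat_pow[OF pi_hom _ grpH, of a m] a pxm by (simp add: am_def)
  define y where "y = x \<otimes>\<^bsub>G\<lparr>carrier := G'\<rparr>\<^esub> inv\<^bsub>G\<lparr>carrier := G'\<rparr>\<^esub> am"
  have y: "y \<in> G'" unfolding y_def
    using H.m_closed[of x "inv\<^bsub>G\<lparr>carrier := G'\<rparr>\<^esub> am"] H.inv_closed[of am] x am by simp
  have xy: "x = y \<otimes>\<^bsub>G\<lparr>carrier := G'\<rparr>\<^esub> am"
    using H.inv_solve_right[of y x am] x y am by (simp add: y_def)
  have "pi x = (pi y + int m) mod int p"
    using hom_mult[OF pi_hom, of y am] y am piam xy by simp
  moreover have "0 \<le> pi y" "pi y < int p" using pi_carr[OF y] by auto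
  ultimately have "pi y = 0" using pxm
    by (smt (verit, ccfv_threshold) div_mod_decomp_int mod_mult_self2_is_0 zmod_trivial_iff)
  hence yL: "y \<in> L" using pi_zero[OF y] by simp
  have rya: "rho a \<in> carrier (Cp p)" "rho y \<in> carrier (Cp p)" "rho am \<in> carrier (Cp p)"
    using rho(1) a y am unfolding hom_def by auto
  have "rho x = (rho y + rho am) mod int p"
    using hom_mult[OF rho(1), of y am] y am xy by simp
  also have "\<dots> = rho am" using rho(2) yL rya p0 by (simp add: carrier_integer_mod_group)
  also have "\<dots> = (int m * rho a) mod int p"
    using hom_nat_pow[OF rho(1) _ grpH, of a m] a rya by (simp add: am_def)
  finally show ?thesis using pxm by (simp add: mult.commute)
qed

definition rhok where "rhok k = (\<lambda>x. if x \<in> G' then (pi x * k) mod int p else undefined)"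

lemma rhok_in: "rhok k \<in> homs_triv G p G' L"
proof -
  have hom: "rhok k \<in> hom (G\<lparr>carrier := G'\<rparr>) (Cp p)"
    unfolding hom_def
  proof (intro CollectI conjI ballI)
    show "rhok k \<in> carrier (G\<lparr>carrier := G'\<rparr>) \<rightarrow> carrier (Cp p)"
      using p0 by (auto simp: rhok_def carrier_integer_mod_group)
    fix x y assume xy: "x \<in> carrier (G\<lparr>carrier := G'\<rparr>)" "y \<in> carrier (G\<lparr>carrier := G'\<rparr>)"
    have m: "x \<otimes>\<^bsub>G\<^esub> y \<in> G'" using xy sG' by (simp add: subgroup.m_closed)
    have "pi (x \<otimes>\<^bsub>G\<^esub> y) = (pi x + pi y) mod int p"
      using hom_mult[OF pi_hom xy] by simp
    thus "rhok k (x \<otimes>\<^bsub>G\<lparr>carrier := G'\<rparr>\<^esub> y) = rhok k x \<otimes>\<^bsub>Cp p\<^esub> rhok k y"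
      using xy m by (simp add: rhok_def mod_mult_left_eq mod_add_eq distrib_right)
  qed
  moreover have "rhok k \<in> extensional G'" by (simp add: rhok_def extensional_def)
  moreover have "\<forall>l\<in>L. rhok k l = 0"
  proof
    fix l assume l: "l \<in> L"
    hence l': "l \<in> G'" using LG' by auto
    hence "pi l = 0" using pi_zero l by simp
    thus "rhok k l = 0" using l' by (simp add: rhok_def)
  qed
  ultimately show ?thesis unfolding homs_triv_def by simp
qed

lemma homs_val: "rho \<in> homs_triv G p G' L \<Longrightarrow> x \<in> G' \<Longrightarrow> rho x \<in> {0..<int p}"
proof -
  assume r: "rho \<in> homs_triv G p G' L" and x: "x \<in> G'"
  have "rho \<in> hom (G\<lparr>carrier := G'\<rparr>) (Cp p)" using r unfolding homs_triv_def by blast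
  hence "rho x \<in> carrier (Cp p)" using x unfolding hom_def by auto
  thus ?thesis using p0 by (simp add: carrier_integer_mod_group)
qed

lemma homs_char: "rho \<in> homs_triv G p G' L \<Longrightarrow> x \<in> G' \<Longrightarrow> a \<in> G' \<Longrightarrow> pi a = 1
   \<Longrightarrow> rho x = (pi x * rho a) mod int p"
proof -
  assume r: "rho \<in> homs_triv G p G' L" and xa: "x \<in> G'" "a \<in> G'" "pi a = 1"
  have h: "rho \<in> hom (G\<lparr>carrier := G'\<rparr>) (Cp p)" "\<forall>l\<in>L. rho l = 0"
    using r unfolding homs_triv_def by blast+
  show ?thesis by (rule char[OF h xa])
qed

lemma homs_bij: "a \<in> G' \<Longrightarrow> pi a = 1 \<Longrightarrow> bij_betw (\<lambda>rho. rho a) (homs_triv G p G' L) {0..<int p}"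
proof -
  assume a: "a \<in> G'" "pi a = 1"
  show ?thesis unfolding bij_betw_def
  proof
    show "inj_on (\<lambda>rho. rho a) (homs_triv G p G' L)"
    proof (rule inj_onI)
      fix r1 r2 assume r: "r1 \<in> homs_triv G p G' L" "r2 \<in> homs_triv G p G' L" "r1 a = r2 a"
      show "r1 = r2"
      proof
        fix x show "r1 x = r2 x"
        proof (cases "x \<in> G'")
          case True thus ?thesis using homs_char[OF r(1) True a] homs_char[OF r(2) True a] r(3) by simp
        next
          case False
          have "r1 \<in> extensional G'" "r2 \<in> extensional G'" using r(1,2) unfolding homs_triv_def by auto
          thus ?thesis using False extensional_arb by metis
        qed
      qed
    qed
    show "(\<lambda>rho. rho a) ` homs_triv G p G' L = {0..<int p}"
    proof
      show "(\<lambda>rho. rho a) ` homs_triv G p G' L \<subseteq> {0..<int p}" using homs_val[OF _ a(1)] by blast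
      show "{0..<int p} \<subseteq> (\<lambda>rho. rho a) ` homs_triv G p G' L"
      proof
        fix k assume k: "k \<in> {0..<int p}"
        have "rhok k a = k" using a k by (simp add: rhok_def)
        thus "k \<in> (\<lambda>rho. rho a) ` homs_triv G p G' L" using rhok_in by (metis image_eqI)
      qed
    qed
  qed
qed

lemma homs_finite: "finite (homs_triv G p G' L)"
proof -
  obtain a where a: "a \<in> G'" "pi a = 1" using ex_a by blast
  have "finite {0..<int p}" by simp
  thus ?thesis using bij_betw_finite[OF homs_bij[OF a]] by simp
qed

lemma homs_count:
  assumes a0: "a0 \<in> G'" and c: "c \<in> {0..<int p}"
  shows "card {rho \<in> homs_triv G p G' L. rho a0 = c} = (if a0 \<in> L then (if c = 0 then p else 0) else 1)"
proof -
  obtain a where a: "a \<in> G'" "pi a = 1" using ex_a by blast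
  let ?T = "homs_triv G p G' L"
  let ?Q = "\<lambda>k. (pi a0 * k) mod int p = c"
  have bij: "bij_betw (\<lambda>rho. rho a) ?T {0..<int p}" using homs_bij[OF a] .
  have e1: "{rho \<in> ?T. rho a0 = c} = {rho \<in> ?T. ?Q (rho a)}"
    using homs_char[OF _ a0 a] by auto
  have "bij_betw (\<lambda>rho. rho a) {rho \<in> ?T. ?Q (rho a)} {k \<in> {0..<int p}. ?Q k}"
    using bij_restrict[OF bij] .
  hence "card {rho \<in> ?T. ?Q (rho a)} = card {k \<in> {0..<int p}. ?Q k}"
    by (rule bij_betw_same_card)
  hence e2: "card {rho \<in> ?T. rho a0 = c} = card {k \<in> {0..<int p}. ?Q k}"
    using e1 by simp
  show ?thesis
  proof (cases "a0 \<in> L")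
    case True
    hence "pi a0 = 0" using pi_zero[OF a0] by simp
    hence "{k \<in> {0..<int p}. ?Q k} = (if c = 0 then {0..<int p} else {})" by auto
    thus ?thesis using e2 True by simp
  next
    case False
    hence d: "0 < pi a0" "pi a0 < int p" using pi_zero[OF a0] pi_carr[OF a0] by auto
    have "card {k \<in> {0..<int p}. ?Q k} = 1" using count_mod[OF p d, of c] c by simp
    thus ?thesis using e2 False by simp
  qed
qed

end


lemma type2_supp:
  assumes "type2 G p G' L H \<noteq> 0"
  shows "H = graph_sg L (\<lambda>_. 0) \<or> H = L \<times> carrier (Cp p) \<or> H = G' \<times> carrier (Cp p)
         \<or> (\<exists>rho \<in> homs_triv G p G' L. H = graph_sg G' rho)"
proof (rule ccontr)
  assume n: "\<not> ?thesis"
  hence "(\<Sum>rho \<in> homs_triv G p G' L. bas (graph_sg G' rho) H) = 0"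
    by (intro sum.neutral) (auto simp: bas_def)
  with n have "type2 G p G' L H = 0" unfolding type2_def bas_def by auto
  with assms show False by simp
qed

lemma bas_sum: "finite A \<Longrightarrow> T \<in> A \<Longrightarrow> (\<Sum>S\<in>A. bas T S * f S) = f T"
proof -
  assume "finite A" "T \<in> A"
  have "(\<Sum>S\<in>A. bas T S * f S) = (\<Sum>S\<in>A. if S = T then f S else 0)"
    by (rule sum.cong) (auto simp: bas_def)
  also have "\<dots> = f T" using sum.delta[OF \<open>finite A\<close>, of T f] \<open>T \<in> A\<close> by simp
  finally show ?thesis .
qed



lemma type2_Kker:
  assumes p: "Factorial_Ring.prime p" and cG: "comm_group G" and fin: "finite (carrier G)"
    and sG': "subgroup G' G" and sL: "subgroup L G" and LG': "L \<subset> G'"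
    and iso: "G\<lparr>carrier := G'\<rparr> Mod L \<cong> Cp p"
  shows "type2 G p G' L \<in> Kker (G \<times>\<times> Cp p)"
proof -
  obtain phi where phi: "phi \<in> iso (G\<lparr>carrier := G'\<rparr> Mod L) (Cp p)" using iso unfolding is_iso_def by blast
  note ctx = p cG sG' sL LG' phi
  interpret G: comm_group G by (rule cG)
  have cP: "comm_group (G \<times>\<times> Cp p)" using P_comm[OF cG] .
  interpret P: comm_group "G \<times>\<times> Cp p" by (rule cP)
  have p0: "p > 0" using p prime_gt_0_nat by blast
  define T where "T = homs_triv G p G' L"
  define T1 where "T1 = graph_sg L (\<lambda>_. 0::int)"
  define T3 where "T3 = L \<times> carrier (Cp p)"
  define T4 where "T4 = G' \<times> carrier (Cp p)"
  define Tr where "Tr rho = graph_sg G' rho" for rho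
  have sT1: "subgroup T1 (G \<times>\<times> Cp p)"
    unfolding T1_def by (rule graph_subgroup[OF G.is_group sL zero_hom[OF G.is_group sL]])
  have sTr: "subgroup (Tr rho) (G \<times>\<times> Cp p)" if "rho \<in> T" for rho
  proof -
    have "rho \<in> hom (G\<lparr>carrier := G'\<rparr>) (Cp p)" using that unfolding T_def homs_triv_def by blast
    thus ?thesis unfolding Tr_def by (rule graph_subgroup[OF G.is_group sG'])
  qed
  have sT3: "subgroup T3 (G \<times>\<times> Cp p)" unfolding T3_def by (rule prod_subgroup[OF G.is_group sL])
  have sT4: "subgroup T4 (G \<times>\<times> Cp p)" unfolding T4_def by (rule prod_subgroup[OF G.is_group sG'])
  define Subs where "Subs = {S. subgroup S (G \<times>\<times> Cp p)}"
  have finP: "finite (carrier (G \<times>\<times> Cp p))" using fin p0 by (simp add: carrier_integer_mod_group)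
  have finSubs: "finite Subs"
  proof -
    have "Subs \<subseteq> Pow (carrier (G \<times>\<times> Cp p))" unfolding Subs_def using subgroup.subset by blast
    moreover have "finite (Pow (carrier (G \<times>\<times> Cp p)))" using finP by simp
    ultimately show ?thesis by (rule finite_subset)
  qed
  have finT: "finite T" unfolding T_def by (rule homs_finite[OF ctx])
  have type2_eq: "type2 G p G' L S = bas T1 S - (\<Sum>rho\<in>T. bas (Tr rho) S) - bas T3 S + int p * bas T4 S" for S
    unfolding type2_def T_def T1_def T3_def T4_def Tr_def by simp
  have burn: "type2 G p G' L \<in> burnside (G \<times>\<times> Cp p)"
    unfolding burnside_def
  proof (intro CollectI allI impI)
    fix S assume "type2 G p G' L S \<noteq> 0"
    from type2_supp[OF this] show "subgroup S (G \<times>\<times> Cp p)"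
      using sT1 sT3 sT4 sTr unfolding T1_def T3_def T4_def Tr_def T_def by blast
  qed
  have finL: "finite L" using fin sL subgroup.subset finite_subset by blast
  have finG': "finite G'" using fin sG' subgroup.subset finite_subset by blast
  have cL: "card L > 0" using finL subgroup.one_closed[OF sL] card_gt_0_iff by blast
  have cG': "card G' = p * card L"
  proof -
    have "card (rcosets\<^bsub>G\<lparr>carrier := G'\<rparr>\<^esub> L) * card L = order (G\<lparr>carrier := G'\<rparr>)"
      by (rule group.lagrange[OF grpH[OF ctx] sLH[OF ctx]])
    moreover have "card (rcosets\<^bsub>G\<lparr>carrier := G'\<rparr>\<^esub> L) = p"
      using iso_same_card[OF iso] Cp_card[OF p] by (simp add: FactGroup_def)
    ultimately show ?thesis by (simp add: order_def)
  qed
  define N where "N = card (carrier (G \<times>\<times> Cp p))"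
  define R where "R S = card (rcosets\<^bsub>G \<times>\<times> Cp p\<^esub> S)" for S
  have lag: "R S * card S = N" if "subgroup S (G \<times>\<times> Cp p)" for S
    unfolding R_def N_def using P.lagrange[OF that] by (simp add: order_def)
  have cT1: "card T1 = card L" unfolding T1_def by (rule graph_card)
  have cTr: "card (Tr rho) = card G'" for rho unfolding Tr_def by (rule graph_card)
  have cT3: "card T3 = card L * p" unfolding T3_def using Cp_card[OF p] by (simp add: card_cartesian_product)
  have cT4: "card T4 = card G' * p" unfolding T4_def using Cp_card[OF p] by (simp add: card_cartesian_product)
  define r where "r = R T3"
  have R1: "R T1 = p * r"
  proof -
    have "R T1 * card L = (p * r) * card L" using lag[OF sT1] lag[OF sT3] cT1 cT3 unfolding r_def by (simp add: algebra_simps)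
    thus ?thesis using cL by simp
  qed
  have Rr: "R (Tr rho) = r" if "rho \<in> T" for rho
  proof -
    have "R (Tr rho) * (p * card L) = r * (p * card L)" using lag[OF sTr[OF that]] lag[OF sT3] cTr cG' cT3 unfolding r_def by (simp add: algebra_simps)
    thus ?thesis using cL p0 by simp
  qed
  have R4: "p * R T4 = r"
  proof -
    have "(p * R T4) * (p * card L) = r * (p * card L)" using lag[OF sT4] lag[OF sT3] cG' cT4 cT3 unfolding r_def by (simp add: algebra_simps)
    thus ?thesis using cL p0 by simp
  qed
  show ?thesis
    unfolding Kker_def
  proof (intro CollectI conjI ballI burn)
    fix g assume g: "g \<in> carrier (G \<times>\<times> Cp p)"
    obtain a c where ac: "g = (a, c)" "a \<in> carrier G" "c \<in> carrier (Cp p)" using g by auto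
    define f where "f S = int (perm_char (G \<times>\<times> Cp p) S g)" for S
    have fS: "f S = (if g \<in> S then int (R S) else 0)" if "subgroup S (G \<times>\<times> Cp p)" for S
      unfolding f_def R_def using perm_char_eq[OF cP that g] by simp
    have inS: "T1 \<in> Subs" "T3 \<in> Subs" "T4 \<in> Subs" "\<And>rho. rho \<in> T \<Longrightarrow> Tr rho \<in> Subs"
      unfolding Subs_def using sT1 sT3 sT4 sTr by auto
    have "(\<Sum>S\<in>Subs. type2 G p G' L S * f S)
        = (\<Sum>S\<in>Subs. bas T1 S * f S - (\<Sum>rho\<in>T. bas (Tr rho) S * f S) - bas T3 S * f S + int p * (bas T4 S * f S))"
      by (rule sum.cong[OF refl]) (simp add: type2_eq algebra_simps sum_distrib_left)
    also have "\<dots> = (\<Sum>S\<in>Subs. bas T1 S * f S) - (\<Sum>S\<in>Subs. \<Sum>rho\<in>T. bas (Tr rho) S * f S)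
        - (\<Sum>S\<in>Subs. bas T3 S * f S) + int p * (\<Sum>S\<in>Subs. bas T4 S * f S)"
      by (simp add: sum.distrib sum_subtractf sum_distrib_left)
    also have "(\<Sum>S\<in>Subs. \<Sum>rho\<in>T. bas (Tr rho) S * f S) = (\<Sum>rho\<in>T. \<Sum>S\<in>Subs. bas (Tr rho) S * f S)"
      by (rule sum.swap)
    also have "\<dots> = (\<Sum>rho\<in>T. f (Tr rho))"
      by (rule sum.cong[OF refl]) (rule bas_sum[OF finSubs inS(4)])
    finally have ex: "(\<Sum>S\<in>Subs. type2 G p G' L S * f S) = f T1 - (\<Sum>rho\<in>T. f (Tr rho)) - f T3 + int p * f T4"
      using bas_sum[OF finSubs inS(1)] bas_sum[OF finSubs inS(2)] bas_sum[OF finSubs inS(3)] by simp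
    have "(\<Sum>rho\<in>T. f (Tr rho)) = (\<Sum>rho\<in>T. if a \<in> G' \<and> rho a = c then int r else 0)"
    proof (rule sum.cong[OF refl])
      fix rho assume rho: "rho \<in> T"
      show "f (Tr rho) = (if a \<in> G' \<and> rho a = c then int r else 0)"
        using fS[OF sTr[OF rho]] Rr[OF rho] ac(1) unfolding Tr_def by (auto simp: graph_mem)
    qed
    also have "\<dots> = (\<Sum>rho \<in> {rho \<in> T. a \<in> G' \<and> rho a = c}. int r)"
      by (rule sum.inter_filter[symmetric, OF finT])
    also have "\<dots> = int r * int (card {rho \<in> T. a \<in> G' \<and> rho a = c})"
      by (simp add: mult.commute)
    finally have sr: "(\<Sum>rho\<in>T. f (Tr rho)) = int r * int (card {rho \<in> T. a \<in> G' \<and> rho a = c})" .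
    have f1: "f T1 = (if a \<in> L \<and> c = 0 then int (p * r) else 0)"
      using fS[OF sT1] R1 ac(1) unfolding T1_def by (auto simp: graph_mem)
    have f3: "f T3 = (if a \<in> L then int r else 0)"
      using fS[OF sT3] ac unfolding T3_def r_def by auto
    have f4: "int p * f T4 = (if a \<in> G' then int r else 0)"
      using fS[OF sT4] ac R4 unfolding T4_def by (auto simp flip: of_nat_mult)
    have cc: "c \<in> {0..<int p}" using ac(3) Cp_carrier[OF p] by simp
    have "f T1 - (\<Sum>rho\<in>T. f (Tr rho)) - f T3 + int p * f T4 = 0"
    proof (cases "a \<in> G'")
      case False
      hence "a \<notin> L" using LG' by auto
      with False show ?thesis using sr f1 f3 f4 by simp
    next
      case True
      have cnt: "card {rho \<in> T. a \<in> G' \<and> rho a = c} = (if a \<in> L then (if c = 0 then p else 0) else 1)"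
        using homs_count[OF ctx True cc] True unfolding T_def by simp
      show ?thesis using True sr f1 f3 f4 cnt by auto
    qed
    thus "(\<Sum>S\<in>{S. subgroup S (G \<times>\<times> Cp p)}. type2 G p G' L S * int (perm_char (G \<times>\<times> Cp p) S g)) = 0"
      using ex unfolding Subs_def f_def by simp
  qed
qed



lemma Kker_zero: "(\<lambda>_. 0) \<in> Kker P"
  unfolding Kker_def burnside_def by simp

lemma Kker_add: "x \<in> Kker P \<Longrightarrow> y \<in> Kker P \<Longrightarrow> (\<lambda>H. x H + y H) \<in> Kker P"
  unfolding Kker_def burnside_def
  by (auto simp: distrib_right sum.distrib) (metis add.right_neutral)

lemma Kker_neg: "x \<in> Kker P \<Longrightarrow> (\<lambda>H. - x H) \<in> Kker P"
  unfolding Kker_def burnside_def by (auto simp: sum_negf)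

lemma supp_zspan:
  assumes "group G" and "x \<in> zspan {type2 G p G' L | G' L.
      subgroup G' G \<and> subgroup L G \<and> L \<subset> G' \<and> (G\<lparr>carrier := G'\<rparr>) Mod L \<cong> Cp p}"
  shows "x H \<noteq> 0 \<Longrightarrow> is_graph G p H \<or> (\<exists>L. subgroup L G \<and> H = L \<times> carrier (Cp p))"
  using assms(2)
proof (induction arbitrary: H)
  case zero thus ?case by simp
next
  case (gen v)
  then obtain G' L where v: "v = type2 G p G' L" "subgroup G' G" "subgroup L G" by blast
  from type2_supp[of G p G' L H] gen(2) v(1) consider
      "H = graph_sg L (\<lambda>_. 0)" | "H = L \<times> carrier (Cp p)" | "H = G' \<times> carrier (Cp p)"
    | "\<exists>rho \<in> homs_triv G p G' L. H = graph_sg G' rho" by blast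
  thus ?case
  proof cases
    case 1 thus ?thesis using zero_hom[OF assms(1) v(3)] v(3) unfolding is_graph_def by blast
  next
    case 2 thus ?thesis using v(3) by blast
  next
    case 3 thus ?thesis using v(2) by blast
  next
    case 4
    then obtain rho where "rho \<in> homs_triv G p G' L" "H = graph_sg G' rho" by blast
    thus ?thesis using v(2) unfolding is_graph_def homs_triv_def by blast
  qed
next
  case (add x y) thus ?case by (cases "x H = 0") auto
next
  case (neg x) thus ?case by simp
qed

theorem corollary7p3:
  fixes G :: "'a monoid" and p :: nat
  assumes "Factorial_Ring.prime p" and "comm_group G" and "finite (carrier G)"
    and "\<exists>n. card (carrier G) = p ^ n"
  shows "type2_module G p \<subseteq> Kker (G \<times>\<times> Cp p)
    \<and> {x \<in> type2_module G p. sigma G p x = (\<lambda>_. 0)} = type2_module G p \<inter> KGC G p"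
proof -
  have grp: "group G" using assms(2) by (simp add: comm_group.axioms(2))
  have part1: "type2_module G p \<subseteq> Kker (G \<times>\<times> Cp p)"
  proof
    fix x assume "x \<in> type2_module G p"
    thus "x \<in> Kker (G \<times>\<times> Cp p)"
      unfolding type2_module_def
    proof (induction)
      case zero thus ?case by (rule Kker_zero)
    next
      case (gen v)
      then obtain G' L where "v = type2 G p G' L" "subgroup G' G" "subgroup L G" "L \<subset> G'"
          "(G\<lparr>carrier := G'\<rparr>) Mod L \<cong> Cp p" by blast
      thus ?case using type2_Kker[OF assms(1-3)] by blast
    next
      case (add x y) thus ?case using Kker_add by blast
    next
      case (neg x) thus ?case using Kker_neg by blast
    qed
  qed
  have part2: "{x \<in> type2_module G p. sigma G p x = (\<lambda>_. 0)} = type2_module G p \<inter> KGC G p"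
  proof (intro equalityI subsetI)
    fix x assume "x \<in> {x \<in> type2_module G p. sigma G p x = (\<lambda>_. 0)}"
    hence xM: "x \<in> type2_module G p" and s0: "sigma G p x = (\<lambda>_. 0)" by auto
    have xK: "x \<in> Kker (G \<times>\<times> Cp p)" using part1 xM by blast
    have "x \<in> BGC G p"
      unfolding BGC_def
    proof (intro CollectI conjI allI impI)
      show "x \<in> burnside (G \<times>\<times> Cp p)" using xK unfolding Kker_def by blast
      fix H assume nz: "x H \<noteq> 0"
      from supp_zspan[OF grp xM[unfolded type2_module_def] nz]
      show "is_graph G p H"
      proof
        assume "\<exists>L. subgroup L G \<and> H = L \<times> carrier (Cp p)"
        then obtain L where "subgroup L G" "H = L \<times> carrier (Cp p)" by blast
        hence "sigma G p x L = x H" unfolding sigma_def by simp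
        with s0 nz show "is_graph G p H" by simp
      qed
    qed
    thus "x \<in> type2_module G p \<inter> KGC G p" using xM xK unfolding KGC_def by blast
  next
    fix x assume x: "x \<in> type2_module G p \<inter> KGC G p"
    have "sigma G p x = (\<lambda>_. 0)"
    proof
      fix L show "sigma G p x L = 0"
      proof (cases "subgroup L G")
        case True
        have "x (L \<times> carrier (Cp p)) = 0"
        proof (rule ccontr)
          assume "x (L \<times> carrier (Cp p)) \<noteq> 0"
          hence "is_graph G p (L \<times> carrier (Cp p))" using x unfolding KGC_def BGC_def by blast
          thus False using not_graph[OF assms(1) True] by blast
        qed
        thus ?thesis unfolding sigma_def using True by simp
      next
        case False thus ?thesis unfolding sigma_def by simp
      qed
    qed
    thus "x \<in> {x \<in> type2_module G p. sigma G p x = (\<lambda>_. 0)}" using x by blast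
  qed
  show ?thesis using part1 part2 by blast
qed


end
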